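(* If $\Theta\vdash S$ is a minimal type for $\mathsf{F_{<:}^\top}$ and $\Theta\vdash^\top T$ is an $\mathsf{F_{<:}^\top}$ type (over an $\mathsf{F_{<:}^\top}$ context $\Theta$), then the subtyping algorithm terminates on the input $\Theta\vdash_A S<:T$.
   Context: System $\mathsf{F_{<:}^{K\top}}$: raw types $T ::= \top \mid X \mid T\to T \mid \forall^{\mathsf K}(X<:T).T \mid \forall^\top(X<:T).T$, up to $\alpha$-conversion. Contexts $\Theta$: finite sequences of $X<:T$ or $x:T$ with distinct variables, each type well-formed over the preceding part. Algorithmic subtyping $\Theta\vdash_A S<:T$ is generated by: (1) $\Theta\vdash_A T<:\top$; (2) $\Theta\vdash_A X<:X$; (3) if $T\not\equiv\top$, $T\not\equiv X$ and $\Theta,X<:S,\Theta'\vdash_A S<:T$, then $\Theta,X<:S,\Theta'\vdash_A X<:T$; (4) from $\Theta\vdash_A S'<:S$ and $\Theta\vdash_A T<:T'$ infer $\Theta\vdash_A S\to T<:S'\to T'$; (5) from $\Theta,X<:S\vdash_A T<:T'$ infer $\Theta\vdash_A\forall^{\mathsf K}(X<:S).T<:\forall^{\mathsf K}(X<:S).T'$; (6) from $\Theta\vdash_A T_0<:S_0$ and $\Theta,X<:S_0\vdash_A S_1<:T_1$ infer $\Theta\vdash_A\forall^{\mathsf K}(X<:S_0).S_1<:\forall^\top(X<:T_0).T_1$; (7) from $\Theta\vdash_A T_0<:S_0$ and $\Theta,X<:\top\vdash_A S_1<:T_1$ infer $\Theta\vdash_A\forall^\top(X<:S_0).S_1<:\forall^\top(X<:T_0).T_1$.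 Each judgement is the conclusion of at most one rule instance; the subtyping algorithm is the resulting deterministic goal-directed search: given $\Theta\vdash_A S<:T$, determine the unique applicable rule (rejecting if none), and recursively check its premises in order, accepting iff all are accepted. An $\mathsf{F_{<:}^\top}$ type/context is one containing only $\forall^\top$ quantifiers. The minimal types for $\mathsf{F_{<:}^\top}$ are the types generated by $T ::= S \mid \forall^{\mathsf K}(X<:S).T \mid S\to T$, where $S$ ranges over $\mathsf{F_{<:}^\top}$ types. *)

theory Defs
  imports Main
begin

text \<open>Raw types of System F-sub^{K,Top} in locally nameless / de Bruijn form
  (alpha-equivalence classes are represented by de Bruijn terms).
  TVar i refers to the i-th enclosing type-variable binder (0 = innermost);
  AllK S T and AllT S T bind index 0 in T (not in S).\<close>

datatype ty = Top | TVar nat | Arr ty ty | AllK ty ty | AllT ty ty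

text \<open>Context bindings: X <: T (type variable) or x : T (term variable).
  Contexts are lists with the most recent binding at the head.
  Only type-variable bindings are counted by de Bruijn indices of types.\<close>

datatype binding = TB ty | VB ty

type_synonym ctx = "binding list"

fun shift :: "nat \<Rightarrow> ty \<Rightarrow> ty" where
  "shift k Top = Top"
| "shift k (TVar i) = (if i < k then TVar i else TVar (Suc i))"
| "shift k (Arr S T) = Arr (shift k S) (shift k T)"
| "shift k (AllK S T) = AllK (shift k S) (shift (Suc k) T)"
| "shift k (AllT S T) = AllT (shift k S) (shift (Suc k) T)"

fun ntv :: "ctx \<Rightarrow> nat" where
  "ntv [] = 0"
| "ntv (TB _ # G) = Suc (ntv G)"
| "ntv (VB _ # G) = ntv G"

text \<open>Bound of type variable i in the context, expressed over the whole context.\<close>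
fun lookup :: "ctx \<Rightarrow> nat \<Rightarrow> ty option" where
  "lookup [] i = None"
| "lookup (VB _ # G) i = lookup G i"
| "lookup (TB T # G) 0 = Some (shift 0 T)"
| "lookup (TB T # G) (Suc i) = map_option (shift 0) (lookup G i)"

fun wf_ty :: "nat \<Rightarrow> ty \<Rightarrow> bool" where
  "wf_ty n Top = True"
| "wf_ty n (TVar i) = (i < n)"
| "wf_ty n (Arr S T) = (wf_ty n S \<and> wf_ty n T)"
| "wf_ty n (AllK S T) = (wf_ty n S \<and> wf_ty (Suc n) T)"
| "wf_ty n (AllT S T) = (wf_ty n S \<and> wf_ty (Suc n) T)"

fun wf_ctx :: "ctx \<Rightarrow> bool" where
  "wf_ctx [] = True"
| "wf_ctx (TB T # G) = (wf_ctx G \<and> wf_ty (ntv G) T)"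
| "wf_ctx (VB T # G) = (wf_ctx G \<and> wf_ty (ntv G) T)"

text \<open>F-sub^Top types: only Top-quantifiers.\<close>
fun top_ty :: "ty \<Rightarrow> bool" where
  "top_ty Top = True"
| "top_ty (TVar i) = True"
| "top_ty (Arr S T) = (top_ty S \<and> top_ty T)"
| "top_ty (AllK S T) = False"
| "top_ty (AllT S T) = (top_ty S \<and> top_ty T)"

fun top_binding :: "binding \<Rightarrow> bool" where
  "top_binding (TB T) = top_ty T"
| "top_binding (VB T) = top_ty T"

definition top_ctx :: "ctx \<Rightarrow> bool" where
  "top_ctx G = (\<forall>b\<in>set G. top_binding b)"

inductive minimal_ty :: "ty \<Rightarrow> bool" where
  "top_ty S \<Longrightarrow> minimal_ty S"
| "top_ty S \<Longrightarrow> minimal_ty T \<Longrightarrow> minimal_ty (AllK S T)"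
| "top_ty S \<Longrightarrow> minimal_ty T \<Longrightarrow> minimal_ty (Arr S T)"

text \<open>The unique applicable rule of algorithmic subtyping for goal G |-A S <: T:
  None = no rule applies (reject); Some ps = the premises of the unique rule,
  in the order they are checked.\<close>
fun alg_rule :: "ctx \<Rightarrow> ty \<Rightarrow> ty \<Rightarrow> (ctx \<times> ty \<times> ty) list option" where
  "alg_rule G S Top = Some []"
| "alg_rule G (TVar i) (TVar j) =
     (if i = j then Some []
      else (case lookup G i of None \<Rightarrow> None | Some U \<Rightarrow> Some [(G, U, TVar j)]))"
| "alg_rule G (TVar i) T =
     (case lookup G i of None \<Rightarrow> None | Some U \<Rightarrow> Some [(G, U, T)])"
| "alg_rule G (Arr S T) (Arr S' T') = Some [(G, S', S), (G, T, T')]"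
| "alg_rule G (AllK S T) (AllK S' T') =
     (if S = S' then Some [(TB S # G, T, T')] else None)"
| "alg_rule G (AllK S0 S1) (AllT T0 T1) = Some [(G, T0, S0), (TB S0 # G, S1, T1)]"
| "alg_rule G (AllT S0 S1) (AllT T0 T1) = Some [(G, T0, S0), (TB Top # G, S1, T1)]"
| "alg_rule G S T = None"

inductive sub_alg :: "ctx \<Rightarrow> ty \<Rightarrow> ty \<Rightarrow> bool" where
  SA_Top: "sub_alg G T Top"
| SA_Refl: "sub_alg G (TVar i) (TVar i)"
| SA_Trans: "T \<noteq> Top \<Longrightarrow> T \<noteq> TVar i \<Longrightarrow> lookup G i = Some U \<Longrightarrow> sub_alg G U T
              \<Longrightarrow> sub_alg G (TVar i) T"
| SA_Arrow: "sub_alg G S' S \<Longrightarrow> sub_alg G T T' \<Longrightarrow> sub_alg G (Arr S T) (Arr S' T')"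
| SA_AllK: "sub_alg (TB S # G) T T' \<Longrightarrow> sub_alg G (AllK S T) (AllK S T')"
| SA_AllKT: "sub_alg G T0 S0 \<Longrightarrow> sub_alg (TB S0 # G) S1 T1
              \<Longrightarrow> sub_alg G (AllK S0 S1) (AllT T0 T1)"
| SA_AllT: "sub_alg G T0 S0 \<Longrightarrow> sub_alg (TB Top # G) S1 T1
              \<Longrightarrow> sub_alg G (AllT S0 S1) (AllT T0 T1)"

text \<open>Big-step semantics of the deterministic goal-directed search: run G S T b means
  the algorithm on input G |-A S <: T terminates with answer b.\<close>
inductive run :: "ctx \<Rightarrow> ty \<Rightarrow> ty \<Rightarrow> bool \<Rightarrow> bool"
  and run_seq :: "(ctx \<times> ty \<times> ty) list \<Rightarrow> bool \<Rightarrow> bool" where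
  run_none: "alg_rule G S T = None \<Longrightarrow> run G S T False"
| run_some: "alg_rule G S T = Some ps \<Longrightarrow> run_seq ps b \<Longrightarrow> run G S T b"
| seq_nil: "run_seq [] True"
| seq_fail: "run G S T False \<Longrightarrow> run_seq ((G, S, T) # ps) False"
| seq_ok: "run G S T True \<Longrightarrow> run_seq ps b \<Longrightarrow> run_seq ((G, S, T) # ps) b"

definition terminates :: "ctx \<Rightarrow> ty \<Rightarrow> ty \<Rightarrow> bool" where
  "terminates G S T = (\<exists>b. run G S T b)"

end

theory Submission
  imports Defs
begin

fun nK :: "ty \<Rightarrow> nat" where
  "nK Top = 0"
| "nK (TVar i) = 0"
| "nK (Arr S T) = nK S + nK T"
| "nK (AllK S T) = Suc (nK S + nK T)"
| "nK (AllT S T) = nK S + nK T"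

fun wt :: "nat list \<Rightarrow> ty \<Rightarrow> nat" where
  "wt E Top = 1"
| "wt E (TVar i) = Suc (if i < length E then E ! i else 0)"
| "wt E (Arr S T) = Suc (wt E S + wt E T)"
| "wt E (AllK S T) = Suc (wt E S + wt (wt E S # E) T)"
| "wt E (AllT S T) = Suc (wt E S + wt (Suc 0 # E) T)"

fun env :: "ctx \<Rightarrow> nat list" where
  "env [] = []"
| "env (VB _ # G) = env G"
| "env (TB T # G) = wt (env G) T # env G"

lemma wt_pos: "0 < wt E T"
  by (induction E T rule: wt.induct) auto

lemma top_nK: "top_ty T \<Longrightarrow> nK T = 0"
  by (induction T) auto

lemma top_shift: "top_ty T \<Longrightarrow> top_ty (shift k T)"
  by (induction k T rule: shift.induct) auto

lemma wt_shift: "k \<le> length E \<Longrightarrow> wt (take k E @ a # drop k E) (shift k T) = wt E T"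
proof (induction T arbitrary: k E)
  case (TVar i)
  then show ?case by (auto simp: nth_append min_def)
next
  case (AllK S T)
  from AllK.prems have "Suc k \<le> length (wt E S # E)" by simp
  from AllK.IH(2)[OF this] AllK.IH(1)[OF AllK.prems] show ?case by simp
next
  case (AllT S T)
  from AllT.prems have "Suc k \<le> length (Suc 0 # E)" by simp
  from AllT.IH(2)[OF this] AllT.IH(1)[OF AllT.prems] show ?case by simp
qed auto

lemma wt_shift0: "wt (a # E) (shift 0 T) = wt E T"
  using wt_shift[of 0 E a T] by simp

lemma lookup_env: "lookup G i = Some U \<Longrightarrow> i < length (env G) \<and> env G ! i = wt (env G) U"
proof (induction G i arbitrary: U rule: lookup.induct)
  case (3 T G)
  then show ?case by (auto simp: wt_shift0)
next
  case (4 T G i)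
  then show ?case by (auto simp: wt_shift0)
qed auto

lemma lookup_top: "top_ctx G \<Longrightarrow> lookup G i = Some U \<Longrightarrow> top_ty U"
proof (induction G i arbitrary: U rule: lookup.induct)
  case (3 T G)
  then show ?case by (auto simp: top_ctx_def top_shift)
next
  case (4 T G i)
  then show ?case by (auto simp: top_ctx_def top_shift)
qed (auto simp: top_ctx_def)

lemma top_min: "top_ty T \<Longrightarrow> minimal_ty T"
  by (rule minimal_ty.intros(1))

lemma min_AllK: "minimal_ty (AllK S T) \<Longrightarrow> top_ty S \<and> minimal_ty T"
  by (cases rule: minimal_ty.cases) auto

lemma min_Arr: "minimal_ty (Arr S T) \<Longrightarrow> top_ty S \<and> minimal_ty T"
  by (cases rule: minimal_ty.cases) (auto intro: top_min)

lemma min_AllT: "minimal_ty (AllT S T) \<Longrightarrow> top_ty S \<and> top_ty T"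
  by (cases rule: minimal_ty.cases) auto

lemma step:
  assumes "alg_rule G S T = Some ps" "(G', S', T') \<in> set ps"
    "top_ctx G" "minimal_ty S" "top_ty T"
  shows "top_ctx G' \<and> minimal_ty S' \<and> top_ty T' \<and>
    (nK S' < nK S \<or> nK S' = nK S \<and> wt (env G') S' + wt (env G') T' < wt (env G) S + wt (env G) T)"
  using assms
proof (induction G S T rule: alg_rule.induct)
  case (2 G i j)
  then show ?case
    by (auto split: if_splits option.splits dest: lookup_env lookup_top intro: top_min simp: top_nK)
next
  case ("3_1" G i T1 T2)
  then show ?case
    by (auto split: if_splits option.splits dest: lookup_env lookup_top intro: top_min simp: top_nK)
next
  case ("3_2" G i T1 T2)
  then show ?case
    by (auto split: if_splits option.splits dest: lookup_env lookup_top intro: top_min simp: top_nK)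
next
  case ("3_3" G i T1 T2)
  then show ?case
    by (auto split: if_splits option.splits dest: lookup_env lookup_top intro: top_min simp: top_nK)
next
  case (4 G S T S' T')
  then show ?case using wt_pos[of "env G"]
    by (auto dest!: min_Arr intro: top_min simp: top_nK)
next
  case (6 G S0 S1 T0 T1)
  then show ?case
    by (auto dest!: min_AllK intro: top_min simp: top_nK top_ctx_def)
next
  case (7 G S0 S1 T0 T1)
  then show ?case using wt_pos[of "env G"]
    by (auto dest!: min_AllT intro: top_min simp: top_nK top_ctx_def)
qed auto

lemma seq_term: "\<forall>p\<in>set ps. terminates (fst p) (fst (snd p)) (snd (snd p)) \<Longrightarrow> \<exists>b. run_seq ps b"
proof (induction ps)
  case Nil
  then show ?case using seq_nil by blast
next
  case (Cons p ps)
  obtain G S T where p: "p = (G, S, T)" by (cases p) auto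
  from Cons.prems p obtain b where r: "run G S T b" by (auto simp: terminates_def)
  show ?case
  proof (cases b)
    case True
    from Cons obtain c where "run_seq ps c" by auto
    with r True p show ?thesis using seq_ok[of G S T ps c] by auto
  next
    case False
    with r p show ?thesis using seq_fail[of G S T ps] by auto
  qed
qed

lemma main:
  "\<forall>G S T. nK S = n \<longrightarrow> wt (env G) S + wt (env G) T = w \<longrightarrow>
     top_ctx G \<longrightarrow> minimal_ty S \<longrightarrow> top_ty T \<longrightarrow> terminates G S T"
proof (induction n arbitrary: w rule: less_induct)
  case (less n)
  note outer = less.IH
  show ?case
  proof (induction w rule: less_induct)
    case (less w)
    show ?case
    proof (intro allI impI)
      fix G S T
      assume a: "nK S = n" "wt (env G) S + wt (env G) T = w" "top_ctx G" "minimal_ty S" "top_ty T"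
      show "terminates G S T"
      proof (cases "alg_rule G S T")
        case None
        then show ?thesis using run_none by (auto simp: terminates_def)
      next
        case (Some ps)
        have "\<forall>p\<in>set ps. terminates (fst p) (fst (snd p)) (snd (snd p))"
        proof
          fix p assume pin: "p \<in> set ps"
          obtain G' S' T' where p: "p = (G', S', T')" by (cases p) auto
          from step[OF Some pin[unfolded p] a(3-5)] a(1,2)
          have st: "top_ctx G' \<and> minimal_ty S' \<and> top_ty T' \<and>
            (nK S' < n \<or> nK S' = n \<and> wt (env G') S' + wt (env G') T' < w)" by simp
          then show "terminates (fst p) (fst (snd p)) (snd (snd p))"
            using less.IH outer p by auto
        qed
        then obtain b where "run_seq ps b" using seq_term by blast
        then show ?thesis using run_some[OF Some] unfolding terminates_def by blast
      qed
    qed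
  qed
qed

theorem proposition8p3:
  assumes "wf_ctx G" and "top_ctx G"
    and "wf_ty (ntv G) S" and "minimal_ty S"
    and "wf_ty (ntv G) T" and "top_ty T"
  shows "terminates G S T"
  using main assms by blast

end
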